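(* Let $k$ be a field of characteristic $\neq 2$, let $\mathcal O$ be the Lie algebra described in the context, and let $\mathcal I$ be an ideal of $\mathcal O$. Let $J_{\mathcal I}=\{p(t)\in k[t]: v_0p(t)+v_1p_1(t)+v_2p_2(t)\in\mathcal I\text{ for some }p_1(t),p_2(t)\in k[t]\}$. Then: (i) $J_{\mathcal I}$ is an ideal of $k[t]$; (ii) $\mathcal O J_{\mathcal I}t(t-1)\subseteq\mathcal I\subseteq\mathcal O J_{\mathcal I}$.
   Context: $\mathcal O$ is the Lie algebra over $k$ which is a free $k[t]$-module with basis $v_0,v_1,v_2$, with $k[t]$-bilinear bracket determined by $[v_0,v_1]=-v_2(t-1)$, $[v_1,v_2]=-v_0$, $[v_2,v_0]=v_1t$ (it is isomorphic to the Onsager algebra). For a subset $J\subseteq k[t]$, $\mathcal O J$ denotes $v_0J\oplus v_1J\oplus v_2J$ when $J$ is an ideal; $\mathcal O Jt(t-1)=\mathcal O\,(Jt(t-1))$. *)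

theory Defs
  imports "HOL-Computational_Algebra.Polynomial"
begin

text \<open>The Onsager-type Lie algebra O: free k[t]-module with basis v0,v1,v2.
  An element v0 p0 + v1 p1 + v2 p2 is represented by the triple (p0, p1, p2).\<close>

type_synonym 'a ons = "'a poly \<times> 'a poly \<times> 'a poly"

text \<open>k[t]-bilinear bracket determined by
  [v0,v1] = -v2 (t-1), [v1,v2] = -v0, [v2,v0] = v1 t (and antisymmetry, [vi,vi]=0).\<close>

definition ons_bracket :: "'a::field ons \<Rightarrow> 'a ons \<Rightarrow> 'a ons" where
  "ons_bracket x y = (case x of (a0, a1, a2) \<Rightarrow> case y of (b0, b1, b2) \<Rightarrow>
     ( - (a1 * b2 - a2 * b1),
       [:0, 1:] * (a2 * b0 - a0 * b2),
       - ([:-1, 1:] * (a0 * b1 - a1 * b0))))"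

definition ons_add :: "'a::field ons \<Rightarrow> 'a ons \<Rightarrow> 'a ons" where
  "ons_add x y = (case x of (a0, a1, a2) \<Rightarrow> case y of (b0, b1, b2) \<Rightarrow> (a0 + b0, a1 + b1, a2 + b2))"

definition ons_scale :: "'a::field \<Rightarrow> 'a ons \<Rightarrow> 'a ons" where
  "ons_scale c x = (case x of (a0, a1, a2) \<Rightarrow> (smult c a0, smult c a1, smult c a2))"

definition ons_lie_ideal :: "'a::field ons set \<Rightarrow> bool" where
  "ons_lie_ideal I \<longleftrightarrow>
     (0, 0, 0) \<in> I \<and>
     (\<forall>x\<in>I. \<forall>y\<in>I. ons_add x y \<in> I) \<and>
     (\<forall>c. \<forall>x\<in>I. ons_scale c x \<in> I) \<and>
     (\<forall>x\<in>I. \<forall>y. ons_bracket y x \<in> I)"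

definition poly_ideal :: "'a::field poly set \<Rightarrow> bool" where
  "poly_ideal J \<longleftrightarrow>
     0 \<in> J \<and> (\<forall>p\<in>J. \<forall>q\<in>J. p + q \<in> J) \<and> (\<forall>p\<in>J. \<forall>q. q * p \<in> J)"

definition J_of :: "'a::field ons set \<Rightarrow> 'a poly set" where
  "J_of I = {p. \<exists>p1 p2. (p, p1, p2) \<in> I}"

definition ons_of :: "'a::field poly set \<Rightarrow> 'a ons set" where
  "ons_of J = {(p0, p1, p2). p0 \<in> J \<and> p1 \<in> J \<and> p2 \<in> J}"

definition times_t_tm1 :: "'a::field poly set \<Rightarrow> 'a poly set" where
  "times_t_tm1 J = {p * [:0, 1:] * [:-1, 1:] | p. p \<in> J}"

end

theory Submission
  imports Defs
begin

lemma br: "ons_bracket (b0,b1,b2) (a0,a1,a2) =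
   (- (b1 * a2 - b2 * a1), [:0, 1:] * (b2 * a0 - b0 * a2), - ([:-1, 1:] * (b0 * a1 - b1 * a0)))"
  by (simp add: ons_bracket_def)

theorem proposition4p6:
  fixes I :: "'a::field ons set"
  assumes char: "(2::'a) \<noteq> 0"
    and ideal: "ons_lie_ideal I"
  shows "poly_ideal (J_of I) \<and>
         ons_of (times_t_tm1 (J_of I)) \<subseteq> I \<and> I \<subseteq> ons_of (J_of I)"
proof -
  let ?X = "[:0, 1:] :: 'a poly" and ?Y = "[:-1, 1:] :: 'a poly"
  have z: "(0,0,0) \<in> I" and add: "\<And>x y. x \<in> I \<Longrightarrow> y \<in> I \<Longrightarrow> ons_add x y \<in> I"
    and sc: "\<And>c x. x \<in> I \<Longrightarrow> ons_scale c x \<in> I"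
    and bI: "\<And>x y. x \<in> I \<Longrightarrow> ons_bracket y x \<in> I"
    using ideal unfolding ons_lie_ideal_def by blast+
  have tJ: "?X * p \<in> J_of I" if pJ: "p \<in> J_of I" for p
  proof -
    obtain p1 p2 where x: "(p, p1, p2) \<in> I" using pJ unfolding J_of_def by blast
    have "ons_bracket (0,0,1) (ons_bracket (0,0,1) (p,p1,p2)) \<in> I" using x bI by blast
    then show ?thesis unfolding J_of_def by (auto simp: br)
  qed
  have addJ: "p + q \<in> J_of I" if pJ: "p \<in> J_of I" and qJ: "q \<in> J_of I" for p q
  proof -
    obtain p1 p2 where x: "(p, p1, p2) \<in> I" using pJ unfolding J_of_def by blast
    obtain q1 q2 where y: "(q, q1, q2) \<in> I" using qJ unfolding J_of_def by blast
    have "ons_add (p,p1,p2) (q,q1,q2) \<in> I" using add x y by blast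
    then show ?thesis unfolding J_of_def by (auto simp: ons_add_def)
  qed
  have scJ: "smult c p \<in> J_of I" if pJ: "p \<in> J_of I" for p c
  proof -
    obtain p1 p2 where x: "(p, p1, p2) \<in> I" using pJ unfolding J_of_def by blast
    have "ons_scale c (p,p1,p2) \<in> I" using sc x by blast
    then show ?thesis unfolding J_of_def by (auto simp: ons_scale_def)
  qed
  have mulJ: "q * p \<in> J_of I" if pJ: "p \<in> J_of I" for p q
  proof (induction q)
    case 0
    show ?case using z unfolding J_of_def by auto
  next
    case (pCons a q)
    have "pCons a q * p = smult a p + ?X * (q * p)"
      by (simp add: algebra_simps)
    moreover have "?X * (q * p) \<in> J_of I" using tJ pCons by blast
    ultimately show ?case using addJ scJ pJ by metis
  qed
  have PI: "poly_ideal (J_of I)"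
    unfolding poly_ideal_def using z addJ mulJ unfolding J_of_def by blast
  have sub2: "I \<subseteq> ons_of (J_of I)"
  proof
    fix x assume xI: "x \<in> I"
    obtain a0 a1 a2 where xe: "x = (a0,a1,a2)" by (cases x) auto
    have "ons_bracket (0,0,1) (a0,a1,a2) \<in> I" using bI xI xe by blast
    then have 1: "a1 \<in> J_of I" unfolding J_of_def by (auto simp: br)
    have "ons_bracket (0,-1,0) (a0,a1,a2) \<in> I" using bI xI xe by blast
    then have 2: "a2 \<in> J_of I" unfolding J_of_def by (auto simp: br)
    have "a0 \<in> J_of I" using xI xe unfolding J_of_def by blast
    then show "x \<in> ons_of (J_of I)" using 1 2 xe unfolding ons_of_def by auto
  qed
  have gen: "(p * ?X * ?Y, 0, 0) \<in> I \<and> (0, p * ?X * ?Y, 0) \<in> I \<and> (0, 0, p * ?X * ?Y) \<in> I"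
    if pJ: "p \<in> J_of I" for p
  proof -
    obtain p1 p2 where x: "(p, p1, p2) \<in> I" using pJ unfolding J_of_def by blast
    have "ons_bracket (-1,0,0) (ons_bracket (0,1,0) (p,p1,p2)) \<in> I" using x bI by blast
    then have A: "(0, p * ?X * ?Y, 0) \<in> I" by (simp add: br algebra_simps)
    have "ons_bracket (-1,0,0) (ons_bracket (0,0,1) (p,p1,p2)) \<in> I" using x bI by blast
    then have B: "(0, 0, p * ?X * ?Y) \<in> I" by (simp add: br algebra_simps)
    have "ons_bracket (0,0,1) (0, p * ?X * ?Y, 0) \<in> I" using A bI by blast
    then have C: "(p * ?X * ?Y, 0, 0) \<in> I" by (simp add: br algebra_simps)
    show ?thesis using A B C by blast
  qed
  have sub1: "ons_of (times_t_tm1 (J_of I)) \<subseteq> I"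
  proof
    fix x assume "x \<in> ons_of (times_t_tm1 (J_of I))"
    then obtain a b c where xe: "x = (a * ?X * ?Y, b * ?X * ?Y, c * ?X * ?Y)"
      and a: "a \<in> J_of I" and b: "b \<in> J_of I" and c: "c \<in> J_of I"
      unfolding ons_of_def times_t_tm1_def by auto
    have "ons_add (a * ?X * ?Y, 0, 0) (ons_add (0, b * ?X * ?Y, 0) (0, 0, c * ?X * ?Y)) \<in> I"
      using gen[OF a] gen[OF b] gen[OF c] add by blast
    then show "x \<in> I" using xe by (simp add: ons_add_def)
  qed
  show ?thesis using PI sub1 sub2 by blast
qed

end
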